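(* Let $p$ be a prime and $m\geq 2$ an integer. For real $x$ let $\omega=\frac{x+\sqrt{x^2+4}}{2}$, and let $i=\sqrt{-1}$. (a) If $p=2$ and $2\mid m$, then $\Psi_{2m}(x)=-i^{\varphi(m)}\Psi_m\!\left(i\omega^2-(i\omega^2)^{-1}\right)=-i^{\varphi(m)}\Psi_m(i(x^2+2))$ when $m=2$, and $\Psi_{2m}(x)=i^{\varphi(m)}\Psi_m\!\left(i\omega^2-(i\omega^2)^{-1}\right)=i^{\varphi(m)}\Psi_m(i(x^2+2))$ when $m\geq3$. (b) If $p=2$ and $2\nmid m$, then $\Psi_{2m}(x)=i^{\varphi(m)}\Psi_m\!\left(i\omega-(i\omega)^{-1}\right)=i^{\varphi(m)}\Psi_m\!\left(i\sqrt{x^2+4}\right)$. (c) If $p>2$ and $p\mid m$, then $\Psi_{pm}(x)=\Psi_m(\omega^p-\omega^{-p})=\Psi_m(x\Psi_{2p}(x))$. (d) If $p>2$ and $p\nmid m$, then $\Psi_{pm}(x)=\dfrac{\Psi_m(\omega^p-\omega^{-p})}{\Psi_m(\omega-\omega^{-1})}=\dfrac{\Psi_m(x\Psi_{2p}(x))}{\Psi_m(x)}$.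
   Context: The Fibonacci polynomials are defined by $F_1(x)=1$, $F_2(x)=x$, and $F_n(x)=xF_{n-1}(x)+F_{n-2}(x)$ for $n\geq 3$. For $n\geq 2$, the $n$-th fibotomic polynomial $\Psi_n(x)\in\mathbb{Z}[x]$ is the product of the monic irreducible factors of $F_n(x)$ which are not factors of $F_k(x)$ for any $k<n$; also $\Psi_1(x)=1$. Thus $F_n(x)=\prod_{d\mid n}\Psi_d(x)$ for all $n\geq1$. $\varphi$ is Euler's totient function. *)

theory Defs
  imports Complex_Main "HOL-Computational_Algebra.Polynomial" "HOL-Number_Theory.Number_Theory"
begin

fun fibpoly :: "nat \<Rightarrow> int poly" where
  "fibpoly 0 = 0"
| "fibpoly (Suc 0) = 1"
| "fibpoly (Suc (Suc n)) = [:0, 1:] * fibpoly (Suc n) + fibpoly n"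

definition fibotomic :: "nat \<Rightarrow> int poly" where
  "fibotomic n = (\<Prod> q \<in> {q :: int poly. lead_coeff q = 1 \<and> irreducible q \<and>
       q dvd fibpoly n \<and> (\<forall>k. 1 \<le> k \<and> k < n \<longrightarrow> \<not> q dvd fibpoly k)}. q)"

definition PsiR :: "nat \<Rightarrow> real \<Rightarrow> real" where
  "PsiR n x = poly (map_poly real_of_int (fibotomic n)) x"

definition PsiC :: "nat \<Rightarrow> complex \<Rightarrow> complex" where
  "PsiC n z = poly (map_poly complex_of_int (fibotomic n)) z"

definition omega :: "real \<Rightarrow> real" where
  "omega x = (x + sqrt (x ^ 2 + 4)) / 2"

end

theory Submission
  imports Defs "HOL-Computational_Algebra.Polynomial_Factorial" "HOL-Computational_Algebra.Fundamental_Theorem_Algebra"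
begin


abbreviation ic :: "int poly \<Rightarrow> complex poly" where "ic p \<equiv> map_poly complex_of_int p"

lemma ic_add: "ic (p + q) = ic p + ic q"
  by (rule poly_eqI) (simp add: coeff_map_poly)

lemma ic_mult: "ic (p * q) = ic p * ic q"
  by (rule poly_eqI) (simp add: coeff_map_poly coeff_mult)

lemma ic_prod: "ic (prod f A) = (\<Prod>a\<in>A. ic (f a))"
  by (induction A rule: infinite_finite_induct) (auto simp: ic_mult)

lemma ic_x: "ic [:0,1:] = [:0,1:]"
  by (simp add: map_poly_pCons)

lemma ic_dvd: "p dvd q \<Longrightarrow> ic p dvd ic q"
  by (auto simp: dvd_def ic_mult)

lemma ic_degree: "degree (ic p) = degree p"
  by (simp add: degree_map_poly)

lemma ic_lead: "lead_coeff (ic p) = of_int (lead_coeff p)"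
  by (simp add: degree_map_poly coeff_map_poly)

lemma ic_real: "complex_of_real (poly (map_poly real_of_int p) x) = poly (ic p) (complex_of_real x)"
  by (induction p) (auto simp: map_poly_pCons)

lemma fib_monic: "n \<ge> 1 \<Longrightarrow> lead_coeff (fibpoly n) = 1 \<and> degree (fibpoly n) = n - 1"
proof (induction n rule: fibpoly.induct)
  case (3 n)
  show ?case
  proof (cases n)
    case 0
    then show ?thesis by simp
  next
    case (Suc k)
    with 3 have h1: "lead_coeff (fibpoly (Suc n)) = 1" "degree (fibpoly (Suc n)) = n"
      and h2: "degree (fibpoly n) = n - 1" by auto
    have nz: "fibpoly (Suc n) \<noteq> 0"
    proof
      assume "fibpoly (Suc n) = 0" then show False using h1 by simp
    qed
    have d: "degree ([:0,1:] * fibpoly (Suc n)) = Suc n"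
      using nz h1 by (simp add: degree_mult_eq)
    have l: "lead_coeff ([:0,1:] * fibpoly (Suc n)) = 1"
      using h1 nz by (simp add: lead_coeff_mult)
    have "degree (fibpoly n) < degree ([:0,1:] * fibpoly (Suc n))" using d h2 by simp
    then show ?thesis using d l
      by (simp add: lead_coeff_add_le degree_add_eq_left coeff_eq_0)
  qed
qed auto

lemma fib_closed:
  fixes w v :: complex
  assumes "w * v = -1"
  shows "poly (ic (fibpoly n)) (w + v) * (w - v) = w ^ n - v ^ n"
proof (induction n rule: fibpoly.induct)
  case (3 n)
  have a: "w * v ^ Suc n = -(v ^ n)" using assms by (metis mult.assoc mult_minus1 power_Suc mult.left_commute)
  have b: "v * w ^ Suc n = -(w ^ n)" using assms by (metis mult.assoc mult_minus1 power_Suc mult.left_commute mult.commute)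
  have "poly (ic (fibpoly (Suc (Suc n)))) (w + v) * (w - v)
      = (w + v) * (poly (ic (fibpoly (Suc n))) (w + v) * (w - v)) + poly (ic (fibpoly n)) (w + v) * (w - v)"
    by (simp add: ic_add ic_mult map_poly_pCons algebra_simps)
  also have "\<dots> = (w + v) * (w ^ Suc n - v ^ Suc n) + (w ^ n - v ^ n)" using 3 by simp
  also have "\<dots> = w ^ Suc (Suc n) - v ^ Suc (Suc n) - w * v ^ Suc n + v * w ^ Suc n + w ^ n - v ^ n"
    by (simp add: algebra_simps)
  also have "\<dots> = w ^ Suc (Suc n) - v ^ Suc (Suc n)" using a b by simp
  finally show ?case .
qed auto



definition rt :: "nat \<Rightarrow> nat \<Rightarrow> complex" where
  "rt n k = \<i> * complex_of_real (2 * cos (real k * pi / real n))"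

lemma cis_pm: "cis t + cis (- t) = complex_of_real (2 * cos t)"
  by (simp add: complex_eq_iff)

lemma cis_mm: "cis t - cis (- t) = \<i> * complex_of_real (2 * sin t)"
  by (simp add: complex_eq_iff)

lemma wv_facts:
  fixes t :: real
  defines "w \<equiv> \<i> * cis t" and "v \<equiv> \<i> * cis (- t)"
  shows "w * v = -1" "w + v = \<i> * complex_of_real (2 * cos t)"
    "w - v = complex_of_real (- 2 * sin t)"
    "w ^ p - v ^ p = \<i> ^ p * \<i> * complex_of_real (2 * sin (real p * t))"
    "w ^ p + v ^ p = \<i> ^ p * complex_of_real (2 * cos (real p * t))"
proof -
  have "w * v = (\<i> * \<i>) * (cis t * cis (- t))" by (simp add: w_def v_def algebra_simps)
  then show "w * v = -1" by (simp add: cis_mult)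
  show "w + v = \<i> * complex_of_real (2 * cos t)" unfolding w_def v_def
    by (metis cis_pm distrib_left)
  have "w - v = \<i> * (cis t - cis (-t))" by (simp add: w_def v_def algebra_simps)
  also have "\<dots> = complex_of_real (- 2 * sin t)" by (simp add: cis_mm)
  finally show "w - v = complex_of_real (- 2 * sin t)" .
  have "w ^ p - v ^ p = \<i> ^ p * (cis (real p * t) - cis (- (real p * t)))"
    by (simp add: w_def v_def power_mult_distrib DeMoivre algebra_simps)
  then show "w ^ p - v ^ p = \<i> ^ p * \<i> * complex_of_real (2 * sin (real p * t))"
    by (simp add: cis_mm)
  have "w ^ p + v ^ p = \<i> ^ p * (cis (real p * t) + cis (- (real p * t)))"
    by (simp add: w_def v_def power_mult_distrib DeMoivre algebra_simps)
  then show "w ^ p + v ^ p = \<i> ^ p * complex_of_real (2 * cos (real p * t))"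
    by (simp add: cis_pm)
qed

lemma rt_eq: "rt n k = \<i> * cis (real k * pi / real n) + \<i> * cis (- (real k * pi / real n))"
  unfolding rt_def using wv_facts(2) by metis

lemma rt_root:
  assumes "1 \<le> k" "k < n"
  shows "poly (ic (fibpoly n)) (rt n k) = 0"
proof -
  define t where "t = real k * pi / real n"
  define w where "w = \<i> * cis t"
  define v where "v = \<i> * cis (- t)"
  have wv: "w * v = -1" "w + v = rt n k" "w - v = complex_of_real (- 2 * sin t)"
     "w ^ n - v ^ n = \<i> ^ n * \<i> * complex_of_real (2 * sin (real n * t))"
    using wv_facts[of t] by (auto simp: w_def v_def rt_def t_def)
  have "real n * t = real k * pi" using assms by (simp add: t_def)
  then have "w ^ n - v ^ n = 0" using wv(4) by simp
  moreover have "sin t > 0" unfolding t_def using assms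
    by (intro sin_gt_zero) (auto simp: field_simps)
  then have "w - v \<noteq> 0" using wv(3) by simp
  ultimately show ?thesis using fib_closed[OF wv(1), of n] wv(2) by simp
qed

lemma rt_inj:
  assumes "n > 0" "m > 0" "j \<le> n" "k \<le> m" "rt n j = rt m k"
  shows "j * m = k * n"
proof -
  have c: "cos (real j * pi / real n) = cos (real k * pi / real m)"
    using assms(5) by (simp add: rt_def)
  have "real j * pi / real n = real k * pi / real m"
  proof (rule cos_inj_pi)
    have a: "real j / real n \<le> 1" "real k / real m \<le> 1" using assms by auto
    have "real j * pi / real n = (real j / real n) * pi" by simp
    also have "\<dots> \<le> 1 * pi" using a by (intro mult_right_mono) auto
    finally show "real j * pi / real n \<le> pi" by simp
    have "real k * pi / real m = (real k / real m) * pi" by simp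
    also have "\<dots> \<le> 1 * pi" using a by (intro mult_right_mono) auto
    finally show "real k * pi / real m \<le> pi" by simp
  qed (use c in auto)
  then have "real j * real m = real k * real n" using assms by (simp add: field_simps)
  then show ?thesis by (metis of_nat_eq_iff of_nat_mult)
qed

lemma prod_lin_nz: "(\<Prod>a\<in>A. [:- a, 1:] :: complex poly) \<noteq> 0"
proof -
  have "\<And>a. [:- a, 1:] \<noteq> (0 :: complex poly)" by simp
  then show ?thesis by (cases "finite A") (auto simp: prod_zero_iff)
qed

lemma prod_lin_degree: "finite A \<Longrightarrow> degree (\<Prod>a\<in>A. [:- a, 1:] :: complex poly) = card A"
proof (induction A rule: finite_induct)
  case (insert x F)
  have "degree ([:- x, 1:] * (\<Prod>a\<in>F. [:- a, 1:])) = degree [:- x, 1:] + degree (\<Prod>a\<in>F. [:- a, 1:] :: complex poly)"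
    by (rule degree_mult_eq) (auto simp: prod_lin_nz)
  then show ?case using insert by simp
qed auto

lemma prod_lin_lead: "lead_coeff (\<Prod>a\<in>A. [:- a, 1:] :: complex poly) = 1"
  by (simp add: lead_coeff_prod)

lemma RP:
  fixes P :: "complex poly"
  assumes "finite A" "card A = degree P" "\<And>a. a \<in> A \<Longrightarrow> poly P a = 0"
  shows "P = Polynomial.smult (lead_coeff P) (\<Prod>a\<in>A. [:- a, 1:])"
proof (rule poly_eqI_degree_lead_coeff[where n = "degree P" and A = A])
  show "poly.coeff P (degree P) = poly.coeff (Polynomial.smult (lead_coeff P) (\<Prod>a\<in>A. [:- a, 1:])) (degree P)"
    using prod_lin_degree[OF assms(1)] assms(2) prod_lin_lead[of A] by simp
  show "degree (Polynomial.smult (lead_coeff P) (\<Prod>a\<in>A. [:- a, 1:])) \<le> degree P"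
    using prod_lin_degree[OF assms(1)] assms(2) by (simp add: degree_smult_le order_trans[OF degree_smult_le])
  fix z assume "z \<in> A"
  then show "poly P z = poly (Polynomial.smult (lead_coeff P) (\<Prod>a\<in>A. [:- a, 1:])) z"
    using assms by (auto simp: poly_prod)
qed (use assms in auto)

definition Rs :: "nat \<Rightarrow> complex set" where "Rs n = rt n ` {1..<n}"

lemma Rs_card: "n \<ge> 1 \<Longrightarrow> card (Rs n) = n - 1"
proof -
  assume n: "n \<ge> 1"
  have "inj_on (rt n) {1..<n}"
  proof (rule inj_onI)
    fix x y assume "x \<in> {1..<n}" "y \<in> {1..<n}" "rt n x = rt n y"
    then have "x * n = y * n" using n by (intro rt_inj) auto
    then show "x = y" using n by simp
  qed
  then show ?thesis unfolding Rs_def by (simp add: card_image)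
qed

lemma Fc_prod: "n \<ge> 1 \<Longrightarrow> ic (fibpoly n) = (\<Prod>a\<in>Rs n. [:- a, 1:])"
proof -
  assume n: "n \<ge> 1"
  have "ic (fibpoly n) = Polynomial.smult (lead_coeff (ic (fibpoly n))) (\<Prod>a\<in>Rs n. [:- a, 1:])"
  proof (rule RP)
    show "finite (Rs n)" by (simp add: Rs_def)
    show "card (Rs n) = degree (ic (fibpoly n))" using fib_monic[OF n] Rs_card[OF n] by (simp add: ic_degree)
    fix a assume "a \<in> Rs n"
    then obtain k where "k \<in> {1..<n}" "a = rt n k" by (auto simp: Rs_def)
    then show "poly (ic (fibpoly n)) a = 0" using rt_root by simp
  qed
  moreover have l: "lead_coeff (ic (fibpoly n)) = 1" using fib_monic[OF n] by (metis ic_lead of_int_1)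
  ultimately show ?thesis by (metis smult_1_left)
qed

lemma Fc_roots: "n \<ge> 1 \<Longrightarrow> poly (ic (fibpoly n)) z = 0 \<longleftrightarrow> z \<in> Rs n"
proof -
  assume n: "n \<ge> 1"
  have f: "finite (Rs n)" by (simp add: Rs_def)
  have "poly (ic (fibpoly n)) z = (\<Prod>a\<in>Rs n. z - a)"
    by (simp only: Fc_prod[OF n] poly_prod) simp
  then show ?thesis using f by (simp add: prod_zero_iff)
qed



definition S :: "nat \<Rightarrow> nat set" where "S n = {k. 0 < k \<and> k < n \<and> coprime k n}"
definition T :: "nat \<Rightarrow> complex set" where "T n = rt n ` S n"

lemma S_finite: "finite (S n)" by (simp add: S_def)
lemma T_finite: "finite (T n)" by (simp add: T_def S_finite)

lemma S_totatives: "n \<ge> 2 \<Longrightarrow> S n = totatives n"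
  by (auto simp: S_def totatives_def le_less)

lemma T_card: "n \<ge> 2 \<Longrightarrow> card (T n) = totient n"
proof -
  assume n: "n \<ge> 2"
  have "inj_on (rt n) (S n)"
  proof (rule inj_onI)
    fix x y assume "x \<in> S n" "y \<in> S n" "rt n x = rt n y"
    then have "x * n = y * n" using n by (intro rt_inj) (auto simp: S_def)
    then show "x = y" using n by simp
  qed
  then show ?thesis using n by (simp add: T_def card_image S_totatives totient_def)
qed

lemma T_sub_Rs: "T n \<subseteq> Rs n"
  by (auto simp: T_def Rs_def S_def)

lemma cos_shift: "cos (x + 2 * real q * pi) = cos x"
  by (simp add: cos_add)

lemma rt_mod: "n > 0 \<Longrightarrow> rt n k = rt n (k mod (2 * n))"
proof -
  assume n: "n > 0"
  obtain q where k: "k = k mod (2 * n) + 2 * n * q" by (metis mod_mult_div_eq add.commute mult.commute)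
  have "real k * pi / real n = real (k mod (2 * n)) * pi / real n + 2 * real q * pi"
    using n by (subst k) (simp add: field_simps)
  then show ?thesis by (simp add: rt_def cos_shift)
qed

lemma rt_refl: "n > 0 \<Longrightarrow> k \<le> 2 * n \<Longrightarrow> rt n k = rt n (2 * n - k)"
proof -
  assume n: "n > 0" and k: "k \<le> 2 * n"
  have "real (2 * n - k) * pi / real n = 2 * pi - real k * pi / real n"
    using n k by (simp add: field_simps of_nat_diff)
  then show ?thesis by (simp add: rt_def)
qed

lemma rt_neg: "n > 0 \<Longrightarrow> - rt n k = rt n (k + n)"
proof -
  assume n: "n > 0"
  have "real (k + n) * pi / real n = real k * pi / real n + pi"
    using n by (simp add: field_simps)
  then show ?thesis by (simp add: rt_def)
qed

lemma rt_sym_pos: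
  assumes n: "n \<ge> 2" and c: "coprime k n"
  shows "rt n k \<in> T n"
proof -
  define r where "r = k mod (2 * n)"
  have e: "rt n k = rt n r" unfolding r_def using n by (intro rt_mod) simp
  have cr: "coprime r n"
  proof -
    have k: "k = (2 * (k div (2 * n))) * n + r" unfolding r_def
      by (metis mod_mult_div_eq add.commute mult.commute mult.assoc)
    have "gcd n k = gcd n r" by (subst k, rule gcd_add_mult)
    then have "gcd r n = gcd k n" by (metis gcd.commute)
    then show ?thesis using c by (metis coprime_iff_gcd_eq_1)
  qed
  have r2: "r < 2 * n" using n by (simp add: r_def)
  have r0: "r \<noteq> 0"
  proof
    assume "r = 0" with cr have "n = 1" by simp
    with n show False by simp
  qed
  have rn: "r \<noteq> n"
  proof
    assume "r = n" with cr have "n = 1" by simp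
    with n show False by simp
  qed
  show ?thesis
  proof (cases "r < n")
    case True
    then show ?thesis using e r0 cr by (auto simp: T_def S_def)
  next
    case False
    then have "rt n r = rt n (2 * n - r)" using n r2 by (intro rt_refl) auto
    moreover have "coprime (2 * n - r) n"
    proof -
      have "2 * n - r = n - (r - n)" using False r2 by simp
      also have "gcd (n - (r - n)) n = gcd (r - n) n" using r2 by (intro gcd_diff2_nat) simp
      also have "\<dots> = gcd r n" using False by (intro gcd_diff1_nat) simp
      finally have "gcd (2 * n - r) n = gcd r n" .
      then show ?thesis using cr by (metis coprime_iff_gcd_eq_1)
    qed
    ultimately show ?thesis using e False rn r2 by (auto simp: T_def S_def)
  qed
qed

lemma rt_sym_neg:
  assumes n: "n \<ge> 2" and c: "coprime k n"
  shows "- rt n k \<in> T n"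
proof -
  have "coprime (k + n) n" using c by (metis coprime_iff_gcd_eq_1 gcd_add1)
  then show ?thesis using rt_neg[of n k] n rt_sym_pos by simp
qed



lemma ic_smult: "ic (Polynomial.smult a p) = Polynomial.smult (of_int a) (ic p)"
  by (rule poly_eqI) (simp add: coeff_map_poly)

lemma ic_const: "ic [:a:] = [:of_int a:]"
  by (simp add: map_poly_pCons)

lemma root_nonconst:
  fixes q :: "int poly"
  assumes "q \<noteq> 0" "poly (ic q) z = 0"
  shows "degree q \<ge> 1"
proof (rule ccontr)
  assume "\<not> degree q \<ge> 1"
  then have "degree q = 0" by simp
  then obtain c where "q = [:c:]" by (metis degree_eq_zeroE)
  with assms show False by (simp add: ic_const)
qed

lemma small_root_zero:
  fixes q :: "int poly"
  assumes q: "irreducible q" and qz: "poly (ic q) z = 0"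
  shows "r \<noteq> 0 \<Longrightarrow> poly (ic r) z = 0 \<Longrightarrow> degree r < degree q \<Longrightarrow> False"
proof (induction "degree r" arbitrary: r rule: less_induct)
  case (less r)
  have pq: "prime_elem q" using q by (simp add: prime_elem_iff_irreducible)
  have qnz: "q \<noteq> 0" using q by auto
  obtain a s where as: "a \<noteq> 0" "Polynomial.smult a q = r * s + pseudo_mod q r"
    using pseudo_mod(1)[OF less.prems(1), of q] by blast
  have t: "pseudo_mod q r = 0 \<or> degree (pseudo_mod q r) < degree r"
    using pseudo_mod(2)[OF less.prems(1), of q] by blast
  have "poly (ic (pseudo_mod q r)) z = poly (ic (Polynomial.smult a q)) z - poly (ic (r * s)) z"
    using as(2) by (simp add: ic_add)
  also have "\<dots> = 0" using qz less.prems(2) by (simp add: ic_smult ic_mult)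
  finally have tz: "poly (ic (pseudo_mod q r)) z = 0" .
  have t0: "pseudo_mod q r = 0"
  proof (rule ccontr)
    assume "pseudo_mod q r \<noteq> 0"
    then show False using less.hyps[of "pseudo_mod q r"] t tz less.prems(3) by auto
  qed
  have "q dvd r * s"
  proof -
    have "Polynomial.smult a q = [:a:] * q" by simp
    then have "q dvd Polynomial.smult a q" by (metis dvd_triv_right)
    then show ?thesis using as(2) t0 by simp
  qed
  then have "q dvd r \<or> q dvd s" using pq prime_elem_dvd_multD by blast
  then show False
  proof
    assume "q dvd r"
    then have "degree q \<le> degree r" using less.prems(1) by (rule dvd_imp_degree_le)
    then show False using less.prems(3) by simp
  next
    assume "q dvd s"
    then obtain u where u: "s = q * u" by (auto simp: dvd_def)
    have "Polynomial.smult a q = [:a:] * q" by simp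
    then have "[:a:] * q = (r * u) * q" using as(2) t0 u by (simp add: ac_simps)
    then have e: "[:a:] = r * u" using qnz by (metis mult_right_cancel)
    then have "u \<noteq> 0" using as(1) by auto
    then have "degree [:a:] = degree r + degree u" using e less.prems(1) degree_mult_eq[of r u] by simp
    then have "degree r = 0" by simp
    then show False using root_nonconst[OF less.prems(1,2)] by simp
  qed
qed

lemma shared_root:
  fixes q G :: "int poly"
  assumes q: "irreducible q" and qz: "poly (ic q) z = 0" and Gz: "poly (ic G) z = 0"
  shows "q dvd G"
proof -
  have pq: "prime_elem q" using q by (simp add: prime_elem_iff_irreducible)
  have qnz: "q \<noteq> 0" using q by auto
  have dq: "degree q \<ge> 1" using root_nonconst[OF qnz qz] .
  obtain a s where as: "a \<noteq> 0" "Polynomial.smult a G = q * s + pseudo_mod G q"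
    using pseudo_mod(1)[OF qnz, of G] by blast
  have t: "pseudo_mod G q = 0 \<or> degree (pseudo_mod G q) < degree q"
    using pseudo_mod(2)[OF qnz, of G] by blast
  have "poly (ic (pseudo_mod G q)) z = poly (ic (Polynomial.smult a G)) z - poly (ic (q * s)) z"
    using as(2) by (simp add: ic_add)
  also have "\<dots> = 0" using qz Gz by (simp add: ic_smult ic_mult)
  finally have tz: "poly (ic (pseudo_mod G q)) z = 0" .
  have t0: "pseudo_mod G q = 0"
    using small_root_zero[OF q qz, of "pseudo_mod G q"] t tz by auto
  have "Polynomial.smult a G = [:a:] * G" by simp
  then have "q dvd [:a:] * G" using as(2) t0 by (metis add_0_right dvd_triv_left)
  then have "q dvd [:a:] \<or> q dvd G" using pq prime_elem_dvd_multD by blast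
  then show ?thesis
  proof
    assume "q dvd [:a:]"
    then have "degree q \<le> degree [:a:]" using as(1) by (intro dvd_imp_degree_le) auto
    then show ?thesis using dq by simp
  qed
qed



lemma prime_monic:
  fixes q :: "int poly"
  assumes "prime q" shows "lead_coeff q \<ge> 0"
proof -
  have "normalize q = q" using assms by (simp add: prime_def)
  then have "poly.coeff (normalize q) (degree q) = lead_coeff q" by simp
  then have e: "lead_coeff q div sgn (lead_coeff q) = lead_coeff q" by (simp add: unit_factor_int_def)
  show ?thesis
  proof (rule ccontr)
    assume "\<not> lead_coeff q \<ge> 0"
    then have "sgn (lead_coeff q) = -1" by simp
    with e have "- lead_coeff q = lead_coeff q" by simp
    with \<open>\<not> lead_coeff q \<ge> 0\<close> show False by simp
  qed
qed

lemma root_factor: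
  fixes G :: "int poly"
  shows "G \<noteq> 0 \<Longrightarrow> lead_coeff G = 1 \<Longrightarrow> poly (ic G) z = 0 \<Longrightarrow>
    \<exists>q. prime q \<and> q dvd G \<and> lead_coeff q = 1 \<and> poly (ic q) z = 0"
proof (induction "degree G" arbitrary: G rule: less_induct)
  case (less G)
  have nu: "\<not> is_unit G"
  proof
    assume "is_unit G"
    then obtain c where "G = [:c:]" "is_unit c" by (auto simp: is_unit_poly_iff)
    then show False using less.prems(3) by (simp add: ic_const)
  qed
  obtain q where q: "q dvd G" "prime q" using prime_divisor_exists[OF less.prems(1) nu] by blast
  obtain H where H: "G = q * H" using q(1) by (auto simp: dvd_def)
  have l: "lead_coeff q * lead_coeff H = 1" using less.prems(2) H by (simp add: lead_coeff_mult)
  then have "lead_coeff q = 1 \<or> lead_coeff q = -1" using zmult_eq_1_iff by blast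
  then have lq: "lead_coeff q = 1" using prime_monic[OF q(2)] by auto
  then have lH: "lead_coeff H = 1" using l by simp
  have qnz: "q \<noteq> 0" "H \<noteq> 0" using lq lH by auto
  have dq: "degree q \<ge> 1"
  proof (rule ccontr)
    assume "\<not> degree q \<ge> 1"
    then have "degree q = 0" by simp
    then have "q = 1" using lq by (metis degree_eq_zeroE lead_coeff_pCons(2) one_pCons pCons_0_0)
    then show False using q(2) by simp
  qed
  have dG: "degree G = degree q + degree H" using H qnz by (simp add: degree_mult_eq)
  show ?case
  proof (cases "poly (ic q) z = 0")
    case True
    then show ?thesis using q lq by blast
  next
    case False
    then have "poly (ic H) z = 0" using less.prems(3) H by (simp add: ic_mult)
    then obtain q' where "prime q'" "q' dvd H" "lead_coeff q' = 1" "poly (ic q') z = 0"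
      using less.hyps[of H] dG dq qnz lH by auto
    then show ?thesis using H by (metis dvd_mult)
  qed
qed

lemma monic_irred_prime:
  fixes q :: "int poly"
  assumes "lead_coeff q = 1" "irreducible q"
  shows "prime q"
proof -
  have "normalize q = q" using assms(1) by (simp add: normalize_poly_eq_map_poly)
  moreover have "prime_elem q" using assms(2) by (simp add: prime_elem_iff_irreducible)
  ultimately show ?thesis by (simp add: prime_def)
qed

lemma prod_primes_dvd:
  fixes G :: "int poly"
  assumes "finite Q" "\<And>q. q \<in> Q \<Longrightarrow> prime q \<and> q dvd G"
  shows "(\<Prod>q\<in>Q. q) dvd G"
  using assms
proof (induction Q rule: finite_induct)
  case (insert x F)
  then have IH: "(\<Prod>q\<in>F. q) dvd G" by auto
  then obtain E where E: "G = (\<Prod>q\<in>F. q) * E" by (auto simp: dvd_def)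
  have px: "prime x" "x dvd G" using insert by auto
  have "\<not> x dvd (\<Prod>q\<in>F. q)"
  proof
    assume "x dvd (\<Prod>q\<in>F. q)"
    then have "\<exists>y\<in>F. x dvd y" using prime_dvd_prod_iff[OF insert(1) px(1), of "\<lambda>q. q"] by simp
    then obtain y where "y \<in> F" "x dvd y" by blast
    then have "x = y" using primes_dvd_imp_eq[OF px(1)] insert by auto
    then show False using \<open>y \<in> F\<close> insert(2) by simp
  qed
  then have "x dvd E" using px E prime_elem_dvd_multD[of x] by (metis prime_imp_prime_elem)
  then show ?case using E insert(1,2) by (auto simp: dvd_def mult_ac)
qed simp

lemma lin_prod_dvd:
  fixes P :: "complex poly"
  assumes "finite A" "\<And>a. a \<in> A \<Longrightarrow> poly P a = 0"
  shows "(\<Prod>a\<in>A. [:- a, 1:]) dvd P"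
  using assms
proof (induction A rule: finite_induct)
  case (insert b F)
  then obtain E where E: "P = (\<Prod>a\<in>F. [:- a, 1:]) * E" by (auto simp: dvd_def)
  have "poly (\<Prod>a\<in>F. [:- a, 1:]) b = (\<Prod>a\<in>F. b - a)" by (simp add: poly_prod)
  also have "\<dots> \<noteq> 0" using insert(1,2) by (auto simp: prod_zero_iff)
  finally have "poly E b = 0" using insert(4)[of b] E by simp
  then obtain E' where E': "E = [:- b, 1:] * E'" by (auto simp: poly_eq_0_iff_dvd dvd_def)
  have pi: "(\<Prod>a\<in>insert b F. [:- a, 1:]) = [:- b, 1:] * (\<Prod>a\<in>F. [:- a, 1:])"
    by (rule prod.insert[OF insert(1,2)])
  have "P = (\<Prod>a\<in>insert b F. [:- a, 1:]) * E'" unfolding pi E E' by (simp only: mult_ac)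
  then show ?case by (metis dvd_triv_left)
qed simp

lemma Fc_sqfree:
  assumes n: "n \<ge> 1"
  shows "\<not> [:- e, 1:] ^ 2 dvd ic (fibpoly n)"
proof
  assume d: "[:- e, 1:] ^ 2 dvd ic (fibpoly n)"
  then have "[:- e, 1:] dvd ic (fibpoly n)" by (metis dvd_power dvd_trans zero_less_numeral)
  then have "poly (ic (fibpoly n)) e = 0" by (simp add: poly_eq_0_iff_dvd)
  then have eR: "e \<in> Rs n" using Fc_roots[OF n] by simp
  have f: "finite (Rs n)" by (simp add: Rs_def)
  have "ic (fibpoly n) = [:- e, 1:] * (\<Prod>a\<in>Rs n - {e}. [:- a, 1:])"
    using Fc_prod[OF n] prod.remove[OF f eR] by metis
  then have "[:- e, 1:] * [:- e, 1:] dvd [:- e, 1:] * (\<Prod>a\<in>Rs n - {e}. [:- a, 1:])"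
    using d by (simp add: power2_eq_square)
  then have "[:- e, 1:] dvd (\<Prod>a\<in>Rs n - {e}. [:- a, 1:])"
    by (subst (asm) dvd_mult_cancel_left) auto
  then have "poly (\<Prod>a\<in>Rs n - {e}. [:- a, 1:]) e = 0" by (simp add: poly_eq_0_iff_dvd)
  then have "(\<Prod>a\<in>Rs n - {e}. e - a) = 0" by (simp add: poly_prod)
  then show False using f by (auto simp: prod_zero_iff)
qed

lemma SD:
  fixes P :: "complex poly"
  assumes n: "n \<ge> 1" and l: "lead_coeff P = 1" and d: "P dvd ic (fibpoly n)"
    and A: "finite A" "\<And>z. poly P z = 0 \<longleftrightarrow> z \<in> A"
  shows "P = (\<Prod>a\<in>A. [:- a, 1:])"
proof -
  obtain E where E: "P = (\<Prod>a\<in>A. [:- a, 1:]) * E"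
    using lin_prod_dvd[OF A(1), of P] A(2) by (auto simp: dvd_def)
  have "degree E = 0"
  proof (rule ccontr)
    assume "degree E \<noteq> 0"
    then have "\<not> constant (poly E)" by (simp add: constant_degree)
    then obtain e where e: "poly E e = 0" using fundamental_theorem_of_algebra by blast
    then have "poly P e = 0" using E by simp
    then have "e \<in> A" using A(2) by simp
    then have "[:- e, 1:] dvd (\<Prod>a\<in>A. [:- a, 1:])" using A(1) by (intro dvd_prodI) auto
    moreover have "[:- e, 1:] dvd E" using e by (simp add: poly_eq_0_iff_dvd)
    ultimately have "[:- e, 1:] * [:- e, 1:] dvd P" using E by (metis mult_dvd_mono)
    then have "[:- e, 1:] ^ 2 dvd ic (fibpoly n)" using d by (metis dvd_trans power2_eq_square)
    then show False using Fc_sqfree[OF n] by blast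
  qed
  then obtain c where c: "E = [:c:]" by (metis degree_eq_zeroE)
  have "lead_coeff P = c" using E c prod_lin_lead[of A] by (simp add: lead_coeff_mult)
  then have "c = 1" using l by simp
  then show ?thesis using E c by simp
qed



lemma rt_scale: "g > 0 \<Longrightarrow> rt (d * g) (k * g) = rt d k"
  by (simp add: rt_def)

lemma E1:
  assumes n: "n \<ge> 1" and z: "z \<in> Rs n" "z \<notin> T n"
  shows "\<exists>d. 1 \<le> d \<and> d < n \<and> z \<in> Rs d"
proof -
  obtain k where k: "1 \<le> k" "k < n" "z = rt n k" using z(1) by (auto simp: Rs_def)
  have nc: "\<not> coprime k n" using z(2) k by (auto simp: T_def S_def)
  define g where "g = gcd k n"
  have g0: "g > 0" using n by (simp add: g_def)
  have g1: "g \<noteq> 1" using nc unfolding g_def by (metis coprime_iff_gcd_eq_1)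
  define d where "d = n div g"
  define k' where "k' = k div g"
  have nd: "n = d * g" unfolding d_def g_def by simp
  have kd: "k = k' * g" unfolding k'_def g_def by simp
  have "z = rt d k'" using k(3) nd kd rt_scale g0 by simp
  moreover have "1 \<le> k'" using kd k(1) by (cases k') auto
  moreover have "k' < d" using k(2) g0 unfolding kd nd by simp
  moreover have "d < n"
  proof -
    have "d * 1 < d * g" using g0 g1 \<open>k' < d\<close> by (intro mult_strict_left_mono) auto
    then show ?thesis using nd by simp
  qed
  ultimately show ?thesis unfolding Rs_def by (intro exI[of _ d]) auto
qed

lemma E2:
  assumes "z \<in> T n" "z \<in> Rs d" "1 \<le> d" "d < n"
  shows False
proof -
  obtain k where k: "k \<in> S n" "z = rt n k" using assms(1) by (auto simp: T_def)
  obtain l where l: "1 \<le> l" "l < d" "z = rt d l" using assms(2) by (auto simp: Rs_def)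
  have "k * d = l * n" using k l assms by (intro rt_inj) (auto simp: S_def)
  then have "n dvd k * d" by (metis dvd_triv_right)
  then have "n dvd d" using k(1) by (auto simp: S_def coprime_dvd_mult_right_iff coprime_commute)
  then show False using assms(3,4) by (auto dest: dvd_imp_le)
qed

definition Qset :: "nat \<Rightarrow> int poly set" where
  "Qset n = {q :: int poly. lead_coeff q = 1 \<and> irreducible q \<and>
       q dvd fibpoly n \<and> (\<forall>k. 1 \<le> k \<and> k < n \<longrightarrow> \<not> q dvd fibpoly k)}"

lemma fibotomic_Q: "fibotomic n = (\<Prod>q\<in>Qset n. q)"
  by (simp add: fibotomic_def Qset_def)

lemma fib_nz: "n \<ge> 1 \<Longrightarrow> fibpoly n \<noteq> 0"
  using fib_monic[of n] by auto

lemma Q_finite: "n \<ge> 1 \<Longrightarrow> finite (Qset n)"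
proof -
  assume n: "n \<ge> 1"
  have "Qset n \<subseteq> prime_factors (fibpoly n)"
    using fib_nz[OF n] by (auto simp: Qset_def in_prime_factors_iff monic_irred_prime)
  then show ?thesis by (rule finite_subset) simp
qed

lemma core:
  assumes n: "n \<ge> 1"
  shows "ic (fibotomic n) = (\<Prod>a\<in>T n. [:- a, 1:])"
proof (rule SD[OF n])
  have fin: "finite (Qset n)" using Q_finite[OF n] .
  show "lead_coeff (ic (fibotomic n)) = 1"
    by (simp only: ic_lead fibotomic_Q lead_coeff_prod) (simp add: Qset_def)
  have "fibotomic n dvd fibpoly n" unfolding fibotomic_Q
    by (rule prod_primes_dvd[OF fin]) (auto simp: Qset_def monic_irred_prime)
  then show "ic (fibotomic n) dvd ic (fibpoly n)" by (rule ic_dvd)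
  show "finite (T n)" by (rule T_finite)
  fix z
  have pz: "poly (ic (fibotomic n)) z = (\<Prod>q\<in>Qset n. poly (ic q) z)"
    by (simp add: fibotomic_Q ic_prod poly_prod)
  show "poly (ic (fibotomic n)) z = 0 \<longleftrightarrow> z \<in> T n"
  proof
    assume "poly (ic (fibotomic n)) z = 0"
    then obtain q where q: "q \<in> Qset n" "poly (ic q) z = 0" using pz fin by (auto simp: prod_zero_iff)
    then have "ic q dvd ic (fibpoly n)" by (intro ic_dvd) (simp add: Qset_def)
    then have "poly (ic (fibpoly n)) z = 0" using q(2) by (metis dvd_def mult_eq_0_iff poly_mult)
    then have zR: "z \<in> Rs n" using Fc_roots[OF n] by simp
    show "z \<in> T n"
    proof (rule ccontr)
      assume "z \<notin> T n"
      then obtain d where d: "1 \<le> d" "d < n" "z \<in> Rs d" using E1[OF n zR] by blast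
      then have "poly (ic (fibpoly d)) z = 0" using Fc_roots by simp
      then have "q dvd fibpoly d" using q by (intro shared_root[of q z]) (auto simp: Qset_def)
      then show False using q(1) d by (auto simp: Qset_def)
    qed
  next
    assume zT: "z \<in> T n"
    then have "poly (ic (fibpoly n)) z = 0" using Fc_roots[OF n] T_sub_Rs by auto
    then obtain q where q: "prime q" "q dvd fibpoly n" "lead_coeff q = 1" "poly (ic q) z = 0"
      using root_factor[of "fibpoly n" z] fib_nz[OF n] fib_monic[OF n] by auto
    have "q \<in> Qset n"
    proof -
      have "\<not> q dvd fibpoly k" if "1 \<le> k" "k < n" for k
      proof
        assume "q dvd fibpoly k"
        then have "ic q dvd ic (fibpoly k)" by (rule ic_dvd)
        then have "poly (ic (fibpoly k)) z = 0" using q(4) by (metis dvd_def mult_eq_0_iff poly_mult)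
        then have "z \<in> Rs k" using Fc_roots that by simp
        then show False using E2[OF zT _ that] by simp
      qed
      then show ?thesis using q by (auto simp: Qset_def prime_elem_imp_irreducible)
    qed
    then show "poly (ic (fibotomic n)) z = 0" using pz fin q(4) by (auto simp: prod_zero_iff)
  qed
qed

lemma PsiC_prod: "n \<ge> 1 \<Longrightarrow> PsiC n z = (\<Prod>a\<in>T n. z - a)"
  by (simp add: PsiC_def core poly_prod)

lemma PsiR_C: "complex_of_real (PsiR n x) = PsiC n (complex_of_real x)"
  by (simp add: PsiR_def PsiC_def ic_real)



lemma PsiC_root: "n \<ge> 1 \<Longrightarrow> a \<in> T n \<Longrightarrow> PsiC n a = 0"
  by (simp add: PsiC_prod T_finite prod_zero_iff)

lemma fibo_deg: "n \<ge> 2 \<Longrightarrow> degree (ic (fibotomic n)) = totient n"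
  by (simp add: core prod_lin_degree T_finite T_card)

lemma fibo_lead: "n \<ge> 1 \<Longrightarrow> lead_coeff (ic (fibotomic n)) = 1"
  by (simp only: core prod_lin_lead)

lemma RPv:
  fixes P :: "complex poly"
  assumes "finite A" "card A = degree P" "\<And>a. a \<in> A \<Longrightarrow> poly P a = 0"
  shows "poly P z = lead_coeff P * (\<Prod>a\<in>A. z - a)"
proof -
  have "poly P z = poly (Polynomial.smult (lead_coeff P) (\<Prod>a\<in>A. [:- a, 1:])) z"
    using RP[OF assms] by metis
  then show ?thesis by (simp add: poly_prod)
qed

lemma omega_pos: "omega x > 0"
proof -
  have "sqrt (x ^ 2 + 4) > sqrt (x ^ 2)" by (intro real_sqrt_less_mono) simp
  then have "sqrt (x ^ 2 + 4) > \<bar>x\<bar>" by simp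
  then show ?thesis by (simp add: omega_def)
qed

lemma omega_inv: "inverse (omega x) = (sqrt (x ^ 2 + 4) - x) / 2"
proof -
  have s: "sqrt (x ^ 2 + 4) ^ 2 = x ^ 2 + 4" by simp
  have "omega x * ((sqrt (x ^ 2 + 4) - x) / 2) = (sqrt (x ^ 2 + 4) ^ 2 - x ^ 2) / 4"
    by (simp add: omega_def field_simps power2_eq_square)
  also have "\<dots> = 1" using s by simp
  finally show ?thesis by (metis inverse_unique)
qed

lemma omega_diff: "omega x - inverse (omega x) = x"
  by (simp only: omega_inv) (simp add: omega_def field_simps)

lemma omega_sum: "omega x + inverse (omega x) = sqrt (x ^ 2 + 4)"
  by (simp only: omega_inv) (simp add: omega_def field_simps)

lemma rt_sq: "rt n k ^ 2 = - complex_of_real (4 * cos (real k * pi / real n) ^ 2)"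
  by (simp add: rt_def power_mult_distrib)

lemma part_a_poly:
  assumes m: "m \<ge> 2" "even m"
  shows "PsiC m (\<i> * (z ^ 2 + 2)) = \<i> ^ totient m * PsiC (2 * m) z"
proof -
  define P where "P = pcompose (ic (fibotomic m)) [:2 * \<i>, 0, \<i>:]"
  have ev: "poly P y = PsiC m (\<i> * (y ^ 2 + 2))" for y
    by (simp add: P_def poly_pcompose PsiC_def algebra_simps power2_eq_square)
  have dq: "degree [:2 * \<i>, 0, \<i>:] = 2" by simp
  have degP: "degree P = totient m * 2" unfolding P_def
    by (simp only: degree_pcompose fibo_deg[OF m(1)] dq)
  have "lead_coeff P = lead_coeff (ic (fibotomic m)) * lead_coeff [:2 * \<i>, 0, \<i>:] ^ degree (ic (fibotomic m))"
    unfolding P_def by (rule lead_coeff_comp) simp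
  moreover have cl: "poly.coeff (ic (fibotomic m)) (totient m) = 1"
    using fibo_lead[of m] fibo_deg[OF m(1)] m by simp
  ultimately have lP: "lead_coeff P = \<i> ^ totient m" using m
    by (simp add: fibo_deg)
  have cT: "card (T (2 * m)) = degree P" using m degP by (simp add: T_card totient_double)
  have "poly P b = 0" if b: "b \<in> T (2 * m)" for b
  proof -
    obtain k where k: "k \<in> S (2 * m)" "b = rt (2 * m) k" using b by (auto simp: T_def)
    have ck: "coprime k m" using k(1) by (auto simp: S_def)
    have "\<i> * (b ^ 2 + 2) = - rt m k"
    proof -
      have "cos (real k * pi / real m) = cos (2 * (real k * pi / real (2 * m)))"
        using m by (simp add: field_simps)
      also have "\<dots> = 2 * cos (real k * pi / real (2 * m)) ^ 2 - 1" by (rule cos_double_cos)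
      finally have c: "cos (real k * pi / real m) = 2 * cos (real k * pi / real (2 * m)) ^ 2 - 1" .
      define c2 where "c2 = cos (real k * pi / real (2 * m))"
      have "\<i> * (b ^ 2 + 2) = \<i> * complex_of_real (2 - 4 * c2 ^ 2)"
        unfolding k(2) rt_sq c2_def[symmetric] by simp
      moreover have "- rt m k = \<i> * complex_of_real (2 - 4 * c2 ^ 2)"
        unfolding rt_def c c2_def[symmetric] by (simp add: algebra_simps)
      ultimately show ?thesis by simp
    qed
    then show ?thesis using ev PsiC_root rt_sym_neg[OF m(1) ck] m by simp
  qed
  then have "poly P z = lead_coeff P * (\<Prod>a\<in>T (2 * m). z - a)"
    using RPv[OF T_finite cT] by blast
  then show ?thesis using ev lP m by (simp add: PsiC_prod)
qed



lemma rt_inj_S: "n \<ge> 1 \<Longrightarrow> inj_on (rt n) (S n)"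
proof (rule inj_onI)
  fix x y assume n: "n \<ge> 1" and "x \<in> S n" "y \<in> S n" "rt n x = rt n y"
  then have "x * n = y * n" by (intro rt_inj) (auto simp: S_def)
  then show "x = y" using n by simp
qed

lemma PsiC_S: "n \<ge> 1 \<Longrightarrow> PsiC n z = (\<Prod>k\<in>S n. z - rt n k)"
  by (simp add: PsiC_prod T_def prod.reindex rt_inj_S)

definition Hh :: "nat \<Rightarrow> nat set" where "Hh n = {k \<in> S n. 2 * k < n}"

lemma rt_compl: "n > 0 \<Longrightarrow> k \<le> n \<Longrightarrow> rt n (n - k) = - rt n k"
proof -
  assume n: "n > 0" and k: "k \<le> n"
  have "real (n - k) * pi / real n = pi - real k * pi / real n"
    using n k by (simp add: field_simps of_nat_diff)
  then show ?thesis by (simp add: rt_def)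
qed

lemma S_split:
  assumes n: "n \<ge> 3"
  shows "S n = Hh n \<union> (\<lambda>k. n - k) ` Hh n" "Hh n \<inter> (\<lambda>k. n - k) ` Hh n = {}"
    "inj_on (\<lambda>k. n - k) (Hh n)"
proof -
  have cop: "coprime (n - k) n \<longleftrightarrow> coprime k n" if "k \<le> n" for k
  proof -
    have "gcd (n - k) n = gcd k n" using that by (rule gcd_diff2_nat)
    then show ?thesis by (metis coprime_iff_gcd_eq_1)
  qed
  have half: "2 * k \<noteq> n" if "k \<in> S n" for k
  proof
    assume h: "2 * k = n"
    then have "k dvd n" by (metis dvd_triv_right)
    then have "gcd k n = k" using gcd_proj1_if_dvd[of k n] by simp
    moreover have "coprime k n" using that by (simp add: S_def)
    ultimately have "k = 1" by (metis coprime_iff_gcd_eq_1)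
    then show False using h n by simp
  qed
  show "S n = Hh n \<union> (\<lambda>k. n - k) ` Hh n"
  proof (intro equalityI subsetI)
    fix k assume k: "k \<in> S n"
    show "k \<in> Hh n \<union> (\<lambda>k. n - k) ` Hh n"
    proof (cases "2 * k < n")
      case True then show ?thesis using k by (simp add: Hh_def)
    next
      case False
      then have "2 * k > n" using half[OF k] by simp
      then have "n - k \<in> Hh n" using k cop[of k] by (auto simp: Hh_def S_def)
      moreover have "k = n - (n - k)" using k by (simp add: S_def)
      ultimately show ?thesis by blast
    qed
  next
    fix k assume "k \<in> Hh n \<union> (\<lambda>k. n - k) ` Hh n"
    then show "k \<in> S n" using cop by (auto simp: Hh_def S_def)
  qed
  show "Hh n \<inter> (\<lambda>k. n - k) ` Hh n = {}" by (auto simp: Hh_def)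
  show "inj_on (\<lambda>k. n - k) (Hh n)" by (rule inj_onI) (auto simp: Hh_def S_def)
qed

lemma Hh_finite: "finite (Hh n)" by (simp add: Hh_def S_def)

lemma Hh_card: "n \<ge> 3 \<Longrightarrow> totient n = 2 * card (Hh n)"
proof -
  assume n: "n \<ge> 3"
  have "totient n = card (S n)" using n by (simp add: S_totatives totient_def)
  also have "\<dots> = card (Hh n) + card ((\<lambda>k. n - k) ` Hh n)"
    using S_split[OF n] Hh_finite by (simp add: card_Un_disjoint)
  also have "\<dots> = 2 * card (Hh n)" using S_split(3)[OF n] by (simp add: card_image)
  finally show ?thesis .
qed

lemma PsiC_half:
  assumes n: "n \<ge> 3"
  shows "PsiC n z = (\<Prod>k\<in>Hh n. z ^ 2 - rt n k ^ 2)"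
proof -
  have "PsiC n z = (\<Prod>k\<in>S n. z - rt n k)" using n by (simp add: PsiC_S)
  also have "\<dots> = (\<Prod>k\<in>Hh n. z - rt n k) * (\<Prod>k\<in>(\<lambda>k. n - k) ` Hh n. z - rt n k)"
    using S_split[OF n] Hh_finite by (simp add: prod.union_disjoint)
  also have "(\<Prod>k\<in>(\<lambda>k. n - k) ` Hh n. z - rt n k) = (\<Prod>k\<in>Hh n. z - rt n (n - k))"
    using S_split(3)[OF n] by (simp add: prod.reindex)
  also have "\<dots> = (\<Prod>k\<in>Hh n. z + rt n k)"
    by (intro prod.cong) (auto simp: Hh_def S_def rt_compl)
  also have "(\<Prod>k\<in>Hh n. z - rt n k) * (\<Prod>k\<in>Hh n. z + rt n k) = (\<Prod>k\<in>Hh n. z ^ 2 - rt n k ^ 2)"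
    by (simp add: prod.distrib[symmetric] power2_eq_square algebra_simps)
  finally show ?thesis .
qed



lemma prod_neg: "(\<Prod>k\<in>A. - f k) = (-1) ^ card A * (\<Prod>k\<in>A. f k :: complex)"
proof -
  have "(\<Prod>k\<in>A. - f k) = (\<Prod>k\<in>A. (-1) * f k)" by simp
  also have "\<dots> = (\<Prod>k\<in>A. (-1::complex)) * (\<Prod>k\<in>A. f k)" by (rule prod.distrib)
  finally show ?thesis by simp
qed

lemma Hh_reindex:
  assumes m: "odd m" "m \<ge> 3"
  shows "(\<Prod>k\<in>Hh m. g (m - 2 * k)) = (\<Prod>l\<in>Hh (2 * m). (g l :: complex))"
proof (rule prod.reindex_bij_witness[where i = "\<lambda>l. (m - l) div 2" and j = "\<lambda>k. m - 2 * k"])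
  fix a assume a: "a \<in> Hh m"
  then have a2: "2 * a < m" "0 < a" "coprime a m" by (auto simp: Hh_def S_def)
  show "(m - (m - 2 * a)) div 2 = a" using a2 by simp
  have "gcd (m - 2 * a) m = gcd (2 * a) m" using a2 by (intro gcd_diff2_nat) simp
  moreover have "coprime (2 * a) m" using a2 m by simp
  ultimately have c1: "coprime (m - 2 * a) m" by (metis coprime_iff_gcd_eq_1)
  have c2: "odd (m - 2 * a)" using m a2 by (simp add: even_diff_nat)
  have "coprime (m - 2 * a) (2 * m)" using c1 c2 by simp
  then show "m - 2 * a \<in> Hh (2 * m)" using a2 by (auto simp: Hh_def S_def)
  show "g (m - 2 * a) = g (m - 2 * a)" ..
next
  fix b assume b: "b \<in> Hh (2 * m)"
  then have b2: "2 * b < 2 * m" "0 < b" "coprime b (2 * m)" by (auto simp: Hh_def S_def)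
  have ob: "odd b" using b2(3) by simp
  have cb: "coprime b m" using b2(3) by simp
  have ev: "even (m - b)" using ob m b2 by simp
  then have e2: "2 * ((m - b) div 2) = m - b" by simp
  show "m - 2 * ((m - b) div 2) = b" using e2 b2 by simp
  have "gcd (m - b) m = gcd b m" using b2 by (intro gcd_diff2_nat) simp
  then have "coprime (2 * ((m - b) div 2)) m" using cb e2 by (metis coprime_iff_gcd_eq_1)
  then have "coprime ((m - b) div 2) m" by simp
  moreover have "0 < (m - b) div 2" using ev b2 ob m by (metis dvd_div_mult_self even_zero
        less_numeral_extra(3) mult_eq_0_iff nat_neq_iff zero_less_diff not_gr0 e2
        le_eq_less_or_eq mult_less_cancel1 odd_pos)
  moreover have "2 * ((m - b) div 2) < m" using e2 b2 by simp
  ultimately show "(m - b) div 2 \<in> Hh m" by (auto simp: Hh_def S_def)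
qed

lemma part_b_poly:
  fixes x :: real
  assumes m: "odd m" "m \<ge> 3"
  shows "PsiC m (\<i> * complex_of_real (sqrt (x ^ 2 + 4)))
         = (-1) ^ card (Hh m) * PsiC (2 * m) (complex_of_real x)"
proof -
  define f where "f k = complex_of_real (x ^ 2 + 4 * sin (real k * pi / real m) ^ 2)" for k :: nat
  define g where "g l = complex_of_real (x ^ 2 + 4 * cos (real l * pi / real (2 * m)) ^ 2)" for l :: nat
  have sq: "sqrt (x ^ 2 + 4) ^ 2 = x ^ 2 + 4" by simp
  have s2: "(\<i> * complex_of_real (sqrt (x ^ 2 + 4))) ^ 2 = - complex_of_real (x ^ 2 + 4)"
    by (simp only: power_mult_distrib of_real_power[symmetric] sq) simp
  have "PsiC m (\<i> * complex_of_real (sqrt (x ^ 2 + 4))) = (\<Prod>k\<in>Hh m. - f k)"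
  proof -
    have "PsiC m (\<i> * complex_of_real (sqrt (x ^ 2 + 4)))
        = (\<Prod>k\<in>Hh m. (\<i> * complex_of_real (sqrt (x ^ 2 + 4))) ^ 2 - rt m k ^ 2)"
      using m by (simp add: PsiC_half)
    also have "\<dots> = (\<Prod>k\<in>Hh m. - f k)"
    proof (intro prod.cong refl)
      fix k
      define c where "c = cos (real k * pi / real m)"
      have "sin (real k * pi / real m) ^ 2 = 1 - c ^ 2"
        by (simp add: sin_squared_eq c_def)
      then have r: "- (x ^ 2 + 4) + 4 * c ^ 2 = - (x ^ 2 + 4 * sin (real k * pi / real m) ^ 2)"
        by simp
      have "(\<i> * complex_of_real (sqrt (x ^ 2 + 4))) ^ 2 - rt m k ^ 2
          = complex_of_real (- (x ^ 2 + 4) + 4 * c ^ 2)"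
        unfolding s2 rt_sq c_def[symmetric] by simp
      also have "\<dots> = - f k" unfolding r f_def by simp
      finally show "(\<i> * complex_of_real (sqrt (x ^ 2 + 4))) ^ 2 - rt m k ^ 2 = - f k" .
    qed
    finally show ?thesis .
  qed
  also have "\<dots> = (-1) ^ card (Hh m) * (\<Prod>k\<in>Hh m. f k)" by (rule prod_neg)
  also have "(\<Prod>k\<in>Hh m. f k) = (\<Prod>k\<in>Hh m. g (m - 2 * k))"
  proof (intro prod.cong refl)
    fix k assume k: "k \<in> Hh m"
    then have k2: "2 * k < m" by (simp add: Hh_def)
    have "real (m - 2 * k) * pi / real (2 * m) = pi / 2 - real k * pi / real m"
      using k2 m by (simp add: of_nat_diff field_simps)
    then have "cos (real (m - 2 * k) * pi / real (2 * m)) = sin (real k * pi / real m)"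
      by (simp add: sin_cos_eq)
    then show "f k = g (m - 2 * k)" by (simp add: f_def g_def)
  qed
  also have "\<dots> = (\<Prod>l\<in>Hh (2 * m). g l)" by (rule Hh_reindex[OF m])
  also have "\<dots> = PsiC (2 * m) (complex_of_real x)"
  proof -
    have "PsiC (2 * m) (complex_of_real x) = (\<Prod>l\<in>Hh (2 * m). (complex_of_real x) ^ 2 - rt (2 * m) l ^ 2)"
      using m by (intro PsiC_half) simp
    also have "\<dots> = (\<Prod>l\<in>Hh (2 * m). g l)"
      by (intro prod.cong refl) (simp add: rt_sq g_def)
    finally show ?thesis by simp
  qed
  finally show ?thesis .
qed



lemma Fc_poly: "n \<ge> 1 \<Longrightarrow> poly (ic (fibpoly n)) z = (\<Prod>a\<in>Rs n. z - a)"
  by (simp add: Fc_prod poly_prod)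

lemma rt_half: "p > 0 \<Longrightarrow> rt (2 * p) p = 0"
  by (simp add: rt_def)

lemma rt_double: "p > 0 \<Longrightarrow> rt (2 * p) (2 * j) = rt p j"
  using rt_scale[of 2 p j] by (simp add: mult.commute)

lemma Fc_2p:
  assumes p: "prime p" "odd p"
  shows "poly (ic (fibpoly (2 * p))) z = z * poly (ic (fibpoly p)) z * PsiC (2 * p) z"
proof -
  have p0: "p > 0" "p \<ge> 2" using prime_ge_2_nat[OF p(1)] by auto
  have eq: "Rs (2 * p) = insert 0 (Rs p \<union> T (2 * p))"
  proof (intro equalityI subsetI)
    fix a assume "a \<in> Rs (2 * p)"
    then obtain k where k: "1 \<le> k" "k < 2 * p" "a = rt (2 * p) k" by (auto simp: Rs_def)
    show "a \<in> insert 0 (Rs p \<union> T (2 * p))"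
    proof (cases "k = p")
      case True then show ?thesis using k rt_half p0 by simp
    next
      case False
      show ?thesis
      proof (cases "even k")
        case True
        then obtain j where j: "k = 2 * j" by blast
        then have "a = rt p j" using k rt_double p0 by simp
        moreover have "1 \<le> j" "j < p" using j k by auto
        ultimately show ?thesis by (auto simp: Rs_def)
      next
        case odd: False
        have "\<not> p dvd k"
        proof
          assume "p dvd k"
          then obtain c where c: "k = p * c" by blast
          then have "c < 2" "c \<noteq> 0" using k p0 by auto
          then have "c = 1" by simp
          then show False using c False by simp
        qed
        then have "coprime p k" using p(1) by (simp add: prime_imp_coprime)
        then have "coprime k (2 * p)" using odd by (simp add: coprime_commute)
        then show ?thesis using k by (auto simp: T_def S_def)
      qed
    qed
  next
    fix a assume a: "a \<in> insert 0 (Rs p \<union> T (2 * p))"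
    have "0 \<in> Rs (2 * p)" using rt_half[OF p0(1)] p0 unfolding Rs_def
      by (intro image_eqI[of _ _ p]) auto
    moreover have "Rs p \<subseteq> Rs (2 * p)"
    proof
      fix b assume "b \<in> Rs p"
      then obtain j where j: "1 \<le> j" "j < p" "b = rt p j" by (auto simp: Rs_def)
      then have "b = rt (2 * p) (2 * j)" using rt_double p0 by simp
      then show "b \<in> Rs (2 * p)" using j unfolding Rs_def by (intro image_eqI[of _ _ "2 * j"]) auto
    qed
    moreover have "T (2 * p) \<subseteq> Rs (2 * p)" by (rule T_sub_Rs)
    ultimately show "a \<in> Rs (2 * p)" using a by blast
  qed
  have d1: "0 \<notin> Rs p \<union> T (2 * p)"
  proof
    assume "0 \<in> Rs p \<union> T (2 * p)"
    then show False
    proof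
      assume "0 \<in> Rs p"
      then obtain j where j: "1 \<le> j" "j < p" "rt p j = rt (2 * p) p"
        using rt_half[OF p0(1)] by (auto simp: Rs_def)
      then have "j * (2 * p) = p * p" using p0 by (intro rt_inj) auto
      then have "2 * j = p" using p0 by simp
      then show False using p(2) by auto
    next
      assume "0 \<in> T (2 * p)"
      then obtain k where k: "k \<in> S (2 * p)" "rt (2 * p) k = rt (2 * p) p"
        using rt_half[OF p0(1)] by (auto simp: T_def)
      then have "k * (2 * p) = p * (2 * p)" using p0 by (intro rt_inj) (auto simp: S_def)
      then have "k = p" using p0 by simp
      then show False using k(1) p0 by (auto simp: S_def)
    qed
  qed
  have d2: "Rs p \<inter> T (2 * p) = {}"
  proof (rule ccontr)
    assume "Rs p \<inter> T (2 * p) \<noteq> {}"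
    then obtain j k where j: "1 \<le> j" "j < p" and k: "k \<in> S (2 * p)" and e: "rt p j = rt (2 * p) k"
      by (auto simp: Rs_def T_def)
    then have "j * (2 * p) = k * p" using p0 by (intro rt_inj) (auto simp: S_def)
    then have "k = 2 * j" using p0 by simp
    then show False using k by (auto simp: S_def)
  qed
  have fin: "finite (Rs p)" "finite (T (2 * p))" by (auto simp: Rs_def T_finite)
  have "poly (ic (fibpoly (2 * p))) z = (\<Prod>a\<in>insert 0 (Rs p \<union> T (2 * p)). z - a)"
    using p0 by (simp add: Fc_poly eq)
  also have "\<dots> = z * ((\<Prod>a\<in>Rs p. z - a) * (\<Prod>a\<in>T (2 * p). z - a))"
    using d1 d2 fin by (simp add: prod.union_disjoint)
  also have "\<dots> = z * poly (ic (fibpoly p)) z * PsiC (2 * p) z"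
    using p0 by (simp add: Fc_poly PsiC_prod)
  finally show ?thesis .
qed

lemma Lval:
  fixes w v :: complex
  assumes p: "prime p" "odd p" and wv: "w * v = -1" "w - v \<noteq> 0" "w ^ p - v ^ p \<noteq> 0"
  shows "(w + v) * PsiC (2 * p) (w + v) = w ^ p + v ^ p"
proof -
  have f1: "poly (ic (fibpoly (2 * p))) (w + v) * (w - v) = w ^ (2 * p) - v ^ (2 * p)"
    by (rule fib_closed[OF wv(1)])
  have f2: "poly (ic (fibpoly p)) (w + v) * (w - v) = w ^ p - v ^ p"
    by (rule fib_closed[OF wv(1)])
  have "(w + v) * PsiC (2 * p) (w + v) * (w ^ p - v ^ p)
      = (w + v) * PsiC (2 * p) (w + v) * (poly (ic (fibpoly p)) (w + v) * (w - v))"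
    by (simp only: f2)
  also have "\<dots> = ((w + v) * poly (ic (fibpoly p)) (w + v) * PsiC (2 * p) (w + v)) * (w - v)"
    by (simp only: mult_ac)
  also have "\<dots> = poly (ic (fibpoly (2 * p))) (w + v) * (w - v)"
    by (simp only: Fc_2p[OF p, of "w + v"])
  also have "\<dots> = (w ^ p + v ^ p) * (w ^ p - v ^ p)"
    using f1 by (simp add: power_mult algebra_simps power2_eq_square)
  finally show ?thesis using wv(3) by simp
qed



definition Lp :: "nat \<Rightarrow> complex poly" where "Lp p = [:0, 1:] * ic (fibotomic (2 * p))"

lemma Lp_eval: "poly (Lp p) y = y * PsiC (2 * p) y"
  by (simp add: Lp_def PsiC_def)

lemma totient_2p: "prime p \<Longrightarrow> odd p \<Longrightarrow> totient (2 * p) = p - 1"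
  by (simp add: totient_double totient_prime)

lemma Lp_deg_lead:
  assumes p: "prime p" "odd p"
  shows "degree (Lp p) = p" "lead_coeff (Lp p) = 1"
proof -
  have p2: "p \<ge> 2" using prime_ge_2_nat[OF p(1)] .
  have d: "degree (ic (fibotomic (2 * p))) = p - 1" using p p2 by (simp add: fibo_deg totient_2p)
  have l: "lead_coeff (ic (fibotomic (2 * p))) = 1" using p2 by (intro fibo_lead) simp
  have nz: "ic (fibotomic (2 * p)) \<noteq> 0"
  proof
    assume "ic (fibotomic (2 * p)) = 0"
    with l show False by simp
  qed
  show "degree (Lp p) = p" unfolding Lp_def using nz d p2 by (simp add: degree_mult_eq)
  show "lead_coeff (Lp p) = 1" unfolding Lp_def using l nz by (simp add: lead_coeff_mult)
qed

lemma sin_nz: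
  assumes m: "m \<ge> 2" and c: "coprime j m"
  shows "sin (real j * pi / real m) \<noteq> 0"
proof
  assume "sin (real j * pi / real m) = 0"
  then obtain i :: int where i: "real j * pi / real m = of_int i * pi" by (auto simp: sin_zero_iff_int2)
  then have "real j = of_int i * real m" using m by (simp add: field_simps)
  then have "int j = i * int m" by (metis of_int_eq_iff of_int_mult of_int_of_nat_eq)
  then have "int m dvd int j" by simp
  then have "m dvd j" by simp
  then have "m dvd gcd j m" by simp
  then show False using c m by simp
qed

lemma ipow_odd: "odd p \<Longrightarrow> \<i> ^ p = \<i> \<or> \<i> ^ p = - \<i>"
proof -
  assume "odd p"
  then obtain q where q: "p = 2 * q + 1" by (metis oddE)
  have "\<i> ^ p = (-1) ^ q * \<i>" by (simp add: q power_mult power_add)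
  then show ?thesis by (cases "even q") auto
qed

lemma ipow_T:
  assumes p: "odd p" and m: "m \<ge> 2" and c: "coprime j m"
  shows "\<i> ^ p * complex_of_real (2 * cos (real j * pi / real m)) \<in> T m"
proof -
  from ipow_odd[OF p] show ?thesis
  proof
    assume "\<i> ^ p = \<i>"
    then have "\<i> ^ p * complex_of_real (2 * cos (real j * pi / real m)) = rt m j"
      by (simp only: rt_def)
    then show ?thesis using rt_sym_pos[OF m c] by simp
  next
    assume "\<i> ^ p = - \<i>"
    then have "\<i> ^ p * complex_of_real (2 * cos (real j * pi / real m)) = - rt m j"
      by (simp only: rt_def) simp
    then show ?thesis using rt_sym_neg[OF m c] by simp
  qed
qed

lemma RootL:
  assumes p: "prime p" "odd p" and N: "0 < k" "k < N"
    and s: "sin (real p * (real k * pi / real N)) \<noteq> 0"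
  shows "poly (Lp p) (rt N k) = \<i> ^ p * complex_of_real (2 * cos (real p * (real k * pi / real N)))"
proof -
  define t where "t = real k * pi / real N"
  define w where "w = \<i> * cis t"
  define v where "v = \<i> * cis (- t)"
  have wv: "w * v = -1" "w + v = rt N k" "w - v = complex_of_real (- 2 * sin t)"
     "w ^ p - v ^ p = \<i> ^ p * \<i> * complex_of_real (2 * sin (real p * t))"
     "w ^ p + v ^ p = \<i> ^ p * complex_of_real (2 * cos (real p * t))"
    using wv_facts[of t] by (auto simp: w_def v_def rt_def t_def)
  have "sin t > 0" unfolding t_def using N
    by (intro sin_gt_zero) (auto simp: field_simps)
  then have "w - v \<noteq> 0" using wv(3) by simp
  moreover have "w ^ p - v ^ p \<noteq> 0" using wv(4) s by (simp add: t_def)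
  ultimately have "(w + v) * PsiC (2 * p) (w + v) = w ^ p + v ^ p" using Lval[OF p wv(1)] by blast
  then show ?thesis using wv(2,5) by (simp add: Lp_eval t_def)
qed

lemma part_c_poly:
  assumes p: "prime p" "odd p" and m: "m \<ge> 2" "p dvd m"
  shows "PsiC m (poly (Lp p) z) = PsiC (p * m) z"
proof -
  have p2: "p \<ge> 2" using prime_ge_2_nat[OF p(1)] .
  define P where "P = pcompose (ic (fibotomic m)) (Lp p)"
  have ev: "poly P y = PsiC m (poly (Lp p) y)" for y by (simp add: P_def poly_pcompose PsiC_def)
  have degP: "degree P = totient m * p" unfolding P_def
    by (simp only: degree_pcompose fibo_deg[OF m(1)] Lp_deg_lead[OF p])
  have "lead_coeff P = lead_coeff (ic (fibotomic m)) * lead_coeff (Lp p) ^ degree (ic (fibotomic m))"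
    unfolding P_def by (rule lead_coeff_comp) (use Lp_deg_lead[OF p] p2 in simp)
  moreover have cL: "poly.coeff (Lp p) p = 1" using Lp_deg_lead[OF p] by simp
  ultimately have lP: "lead_coeff P = 1" using m by (simp only: Lp_deg_lead[OF p] fibo_lead) (simp add: cL)
  have gcdpm: "gcd p m = p" using m(2) by (simp add: gcd_nat.absorb1)
  have tp: "totient p > 0" using p2 by simp
  have "totient (p * m) = totient p * totient m * p div totient p"
    using gcdpm by (simp add: totient_mult)
  also have "\<dots> = totient m * p" using tp by simp
  moreover have pm2: "p * m \<ge> 2"
    using mult_le_mono[of 2 p 1 m] p2 m by simp
  ultimately have cT: "card (T (p * m)) = degree P" using degP by (simp add: T_card)
  have "poly P b = 0" if b: "b \<in> T (p * m)" for b
  proof -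
    obtain k where k: "k \<in> S (p * m)" "b = rt (p * m) k" using b by (auto simp: T_def)
    have ck: "coprime k m" using k(1) by (auto simp: S_def)
    have e: "real p * (real k * pi / real (p * m)) = real k * pi / real m" using p2 by simp
    have "poly (Lp p) b = \<i> ^ p * complex_of_real (2 * cos (real k * pi / real m))"
      using RootL[OF p, of k "p * m"] k e sin_nz[OF m(1) ck] by (auto simp: S_def)
    then show ?thesis using ev PsiC_root ipow_T[OF p(2) m(1) ck] m by simp
  qed
  then have "poly P z = lead_coeff P * (\<Prod>a\<in>T (p * m). z - a)"
    using RPv[OF T_finite cT] by blast
  then show ?thesis using ev lP p2 m by (simp add: PsiC_prod)
qed

lemma part_d_poly:
  assumes p: "prime p" "odd p" and m: "m \<ge> 2" "\<not> p dvd m"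
  shows "PsiC m (poly (Lp p) z) = PsiC (p * m) z * PsiC m z"
proof -
  have p2: "p \<ge> 2" using prime_ge_2_nat[OF p(1)] .
  have cpm: "coprime p m" using p(1) m(2) by (simp add: prime_imp_coprime)
  define P where "P = pcompose (ic (fibotomic m)) (Lp p)"
  have ev: "poly P y = PsiC m (poly (Lp p) y)" for y by (simp add: P_def poly_pcompose PsiC_def)
  have degP: "degree P = totient m * p" unfolding P_def
    by (simp only: degree_pcompose fibo_deg[OF m(1)] Lp_deg_lead[OF p])
  have "lead_coeff P = lead_coeff (ic (fibotomic m)) * lead_coeff (Lp p) ^ degree (ic (fibotomic m))"
    unfolding P_def by (rule lead_coeff_comp) (use Lp_deg_lead[OF p] p2 in simp)
  moreover have cL: "poly.coeff (Lp p) p = 1" using Lp_deg_lead[OF p] by simp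
  ultimately have lP: "lead_coeff P = 1" using m by (simp only: Lp_deg_lead[OF p] fibo_lead) (simp add: cL)
  have disj: "T (p * m) \<inter> T m = {}"
  proof (rule ccontr)
    assume "T (p * m) \<inter> T m \<noteq> {}"
    then obtain k j where k: "k \<in> S (p * m)" and j: "j \<in> S m" and e: "rt (p * m) k = rt m j"
      by (auto simp: T_def)
    then have "k * m = j * (p * m)" using m p2 by (intro rt_inj) (auto simp: S_def)
    then have "k = j * p" using m by simp
    then have "p dvd gcd k (p * m)" by simp
    moreover have "coprime k (p * m)" using k by (simp add: S_def)
    ultimately have "coprime k p" by simp
    then show False using coprime_common_divisor[of k p p] \<open>k = j * p\<close> p2 by auto
  qed
  have pm2: "p * m \<ge> 2" using mult_le_mono[of 2 p 1 m] p2 m by simp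
  have "totient (p * m) = totient p * totient m" using cpm by (rule totient_mult_coprime)
  then have "card (T (p * m) \<union> T m) = (p - 1) * totient m + totient m"
    using disj p2 m p pm2 by (simp add: card_Un_disjoint T_finite T_card totient_prime)
  also have "\<dots> = degree P" using degP p2 by (simp add: algebra_simps)
  finally have cT: "card (T (p * m) \<union> T m) = degree P" .
  have "poly P b = 0" if b: "b \<in> T (p * m) \<union> T m" for b
    using b
  proof
    assume b: "b \<in> T (p * m)"
    obtain k where k: "k \<in> S (p * m)" "b = rt (p * m) k" using b by (auto simp: T_def)
    have ck: "coprime k m" using k(1) by (auto simp: S_def)
    have e: "real p * (real k * pi / real (p * m)) = real k * pi / real m" using p2 by simp
    have "poly (Lp p) b = \<i> ^ p * complex_of_real (2 * cos (real k * pi / real m))"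
      using RootL[OF p, of k "p * m"] k e sin_nz[OF m(1) ck] by (auto simp: S_def)
    then show ?thesis using ev PsiC_root ipow_T[OF p(2) m(1) ck] m by simp
  next
    assume b: "b \<in> T m"
    obtain j where j: "j \<in> S m" "b = rt m j" using b by (auto simp: T_def)
    have cj: "coprime (p * j) m" using j(1) cpm by (auto simp: S_def)
    have e: "real p * (real j * pi / real m) = real (p * j) * pi / real m" by simp
    have s': "sin (real p * (real j * pi / real m)) \<noteq> 0" unfolding e by (rule sin_nz[OF m(1) cj])
    have jj: "0 < j" "j < m" using j(1) by (auto simp: S_def)
    have "poly (Lp p) b = \<i> ^ p * complex_of_real (2 * cos (real p * (real j * pi / real m)))"
      unfolding j(2) by (rule RootL[OF p jj s'])
    then have "poly (Lp p) b = \<i> ^ p * complex_of_real (2 * cos (real (p * j) * pi / real m))"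
      by (simp only: e)
    then show ?thesis using ev PsiC_root ipow_T[OF p(2) m(1) cj] m by simp
  qed
  then have "poly P z = lead_coeff P * (\<Prod>a\<in>T (p * m) \<union> T m. z - a)"
    using RPv[OF _ cT] T_finite by blast
  also have "\<dots> = (\<Prod>a\<in>T (p * m). z - a) * (\<Prod>a\<in>T m. z - a)"
    using lP disj by (simp add: prod.union_disjoint T_finite)
  finally show ?thesis using ev p2 m by (simp add: PsiC_prod)
qed



lemma real_L:
  fixes x :: real
  assumes p: "prime p" "odd p"
  shows "x * PsiR (2 * p) x = omega x ^ p - inverse (omega x ^ p)"
proof -
  define om where "om = omega x"
  have o0: "om > 0" using omega_pos[of x] by (simp add: om_def)
  define w where "w = complex_of_real om"
  define v where "v = - complex_of_real (inverse om)"
  have wv: "w * v = -1" using o0 by (simp add: w_def v_def)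
  have "w + v = complex_of_real (om - inverse om)" by (simp add: w_def v_def)
  then have wpv: "w + v = complex_of_real x" using omega_diff by (simp add: om_def)
  have vp: "v ^ p = - complex_of_real (inverse om ^ p)"
    using p(2) by (simp add: v_def power_minus_odd)
  have "w - v = complex_of_real (om + inverse om)" by (simp add: w_def v_def)
  moreover have "om + inverse om > 0" using o0 by (simp add: add_pos_pos)
  ultimately have wmv: "w - v \<noteq> 0" by (metis of_real_eq_0_iff less_irrefl)
  have "w ^ p - v ^ p = complex_of_real (om ^ p + inverse om ^ p)" by (simp add: w_def vp)
  moreover have "om ^ p + inverse om ^ p > 0" using o0 by (simp add: add_pos_pos)
  ultimately have wpmv: "w ^ p - v ^ p \<noteq> 0" by (metis of_real_eq_0_iff less_irrefl)
  have "(w + v) * PsiC (2 * p) (w + v) = w ^ p + v ^ p" by (rule Lval[OF p wv wmv wpmv])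
  then have e1: "complex_of_real x * PsiC (2 * p) (complex_of_real x) = w ^ p + v ^ p" by (simp only: wpv)
  have e2: "w ^ p + v ^ p = complex_of_real (om ^ p - inverse om ^ p)" by (simp add: w_def vp)
  have "complex_of_real (x * PsiR (2 * p) x) = complex_of_real (om ^ p - inverse om ^ p)"
    using e1 e2 by (simp add: PsiR_C)
  then have "x * PsiR (2 * p) x = om ^ p - inverse om ^ p" by (simp only: of_real_eq_iff)
  then show ?thesis by (simp add: om_def power_inverse)
qed

lemma i_solve:
  fixes c y :: complex
  assumes "\<i> * c = y" shows "c = - \<i> * y"
proof -
  have "y = \<i> * c" using assms by simp
  then show ?thesis by (simp add: mult.assoc[symmetric])
qed

lemma inv_i_arg:
  fixes c :: real
  assumes "c > 0"
  shows "\<i> * complex_of_real c - inverse (\<i> * complex_of_real c) = \<i> * complex_of_real (c + inverse c)"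
proof -
  have "inverse (\<i> * complex_of_real c) = - \<i> * complex_of_real (inverse c)"
    using assms by (simp add: field_simps)
  then show ?thesis by (simp add: algebra_simps)
qed

lemma omega_sq: "omega x ^ 2 + inverse (omega x ^ 2) = x ^ 2 + 2"
proof -
  have o0: "omega x > 0" by (rule omega_pos)
  have "x ^ 2 = (omega x - inverse (omega x)) ^ 2" by (simp add: omega_diff)
  also have "\<dots> = omega x ^ 2 + inverse (omega x) ^ 2 - 2" using o0
    by (simp add: power2_eq_square field_simps)
  finally show ?thesis by (simp add: power_inverse)
qed

theorem mainTheorem6:
  fixes p m :: nat and x :: real
  assumes "prime p" and "m \<ge> 2"
  shows
   "(p = 2 \<and> 2 dvd m \<and> m = 2 \<longrightarrow>
       complex_of_real (PsiR (2 * m) x)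
         = - (\<i> ^ totient m) * PsiC m (\<i> * complex_of_real (omega x ^ 2)
                                      - inverse (\<i> * complex_of_real (omega x ^ 2)))
     \<and> complex_of_real (PsiR (2 * m) x)
         = - (\<i> ^ totient m) * PsiC m (\<i> * complex_of_real (x ^ 2 + 2)))
  \<and> (p = 2 \<and> 2 dvd m \<and> m \<ge> 3 \<longrightarrow>
       complex_of_real (PsiR (2 * m) x)
         = (\<i> ^ totient m) * PsiC m (\<i> * complex_of_real (omega x ^ 2)
                                      - inverse (\<i> * complex_of_real (omega x ^ 2)))
     \<and> complex_of_real (PsiR (2 * m) x)
         = (\<i> ^ totient m) * PsiC m (\<i> * complex_of_real (x ^ 2 + 2)))
  \<and> (p = 2 \<and> \<not> 2 dvd m \<longrightarrow>
       complex_of_real (PsiR (2 * m) x)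
         = (\<i> ^ totient m) * PsiC m (\<i> * complex_of_real (omega x)
                                      - inverse (\<i> * complex_of_real (omega x)))
     \<and> complex_of_real (PsiR (2 * m) x)
         = (\<i> ^ totient m) * PsiC m (\<i> * complex_of_real (sqrt (x ^ 2 + 4))))
  \<and> (p > 2 \<and> p dvd m \<longrightarrow>
       PsiR (p * m) x = PsiR m (omega x ^ p - inverse (omega x ^ p))
     \<and> PsiR (p * m) x = PsiR m (x * PsiR (2 * p) x))
  \<and> (p > 2 \<and> \<not> p dvd m \<and> PsiR m x \<noteq> 0 \<longrightarrow>
       PsiR (p * m) x = PsiR m (omega x ^ p - inverse (omega x ^ p))
                        / PsiR m (omega x - inverse (omega x))
     \<and> PsiR (p * m) x = PsiR m (x * PsiR (2 * p) x) / PsiR m x)"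
proof -
  have cx: "complex_of_real (x ^ 2 + 2) = (complex_of_real x) ^ 2 + 2" by simp
  have A1: "\<i> * complex_of_real (omega x ^ 2) - inverse (\<i> * complex_of_real (omega x ^ 2))
      = \<i> * complex_of_real (x ^ 2 + 2)"
    using inv_i_arg[of "omega x ^ 2"] omega_pos[of x] omega_sq[of x] by (simp add: power_inverse)
  have B1: "\<i> * complex_of_real (omega x) - inverse (\<i> * complex_of_real (omega x))
      = \<i> * complex_of_real (sqrt (x ^ 2 + 4))"
    using inv_i_arg[of "omega x"] omega_pos[of x] omega_sum[of x] by simp
  have ii: "\<i> ^ 2 = (-1 :: complex)" by simp
  have PA: "\<i> ^ totient m * complex_of_real (PsiR (2 * m) x) = PsiC m (\<i> * complex_of_real (x ^ 2 + 2))"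
    if "even m" using part_a_poly[OF assms(2) that, of "complex_of_real x"] by (simp add: PsiR_C cx)
  have partA1: "complex_of_real (PsiR (2 * m) x)
         = - (\<i> ^ totient m) * PsiC m (\<i> * complex_of_real (x ^ 2 + 2))" if "m = 2"
  proof -
    have "\<i> * complex_of_real (PsiR (2 * m) x) = PsiC m (\<i> * complex_of_real (x ^ 2 + 2))"
      using PA that by simp
    from i_solve[OF this] show ?thesis using that by simp
  qed
  have partA2: "complex_of_real (PsiR (2 * m) x)
         = (\<i> ^ totient m) * PsiC m (\<i> * complex_of_real (x ^ 2 + 2))" if "even m" "m \<ge> 3"
  proof -
    have "even (totient m)" using that by (intro totient_even) auto
    then obtain h where h: "totient m = 2 * h" by blast
    have "\<i> ^ totient m * \<i> ^ totient m = (1 :: complex)"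
      by (simp add: h power_mult[symmetric] power_add[symmetric] mult_2[symmetric]
          power_mult ii)
    then show ?thesis using PA[OF that(1)] by (metis mult.assoc mult_1)
  qed
  have partB: "complex_of_real (PsiR (2 * m) x)
         = (\<i> ^ totient m) * PsiC m (\<i> * complex_of_real (sqrt (x ^ 2 + 4)))" if "odd m"
  proof -
    have m3: "m \<ge> 3" using that assms(2) by (cases "m = 2") auto
    have h: "totient m = 2 * card (Hh m)" using Hh_card[OF m3] .
    have "\<i> ^ totient m = ((-1) ^ card (Hh m) :: complex)" by (simp add: h power_mult ii)
    then show ?thesis using part_b_poly[OF that m3, of x]
      by (simp add: PsiR_C power_mult_distrib[symmetric])
  qed
  have partCD: "complex_of_real (PsiR m (x * PsiR (2 * p) x)) = PsiC m (poly (Lp p) (complex_of_real x))"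
    by (simp add: PsiR_C Lp_eval)
  have partC: "PsiR (p * m) x = PsiR m (x * PsiR (2 * p) x)" if "p > 2" "p dvd m"
  proof -
    have op: "odd p" using assms(1) that(1) by (metis prime_odd_nat)
    have "complex_of_real (PsiR (p * m) x) = complex_of_real (PsiR m (x * PsiR (2 * p) x))"
      using part_c_poly[OF assms(1) op assms(2) that(2)] partCD by (simp add: PsiR_C)
    then show ?thesis by simp
  qed
  have partD: "PsiR (p * m) x = PsiR m (x * PsiR (2 * p) x) / PsiR m x"
    if "p > 2" "\<not> p dvd m" "PsiR m x \<noteq> 0"
  proof -
    have op: "odd p" using assms(1) that(1) by (metis prime_odd_nat)
    have "complex_of_real (PsiR m (x * PsiR (2 * p) x)) = complex_of_real (PsiR (p * m) x * PsiR m x)"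
      using part_d_poly[OF assms(1) op assms(2) that(2)] partCD by (simp add: PsiR_C)
    then have "PsiR m (x * PsiR (2 * p) x) = PsiR (p * m) x * PsiR m x" by (simp only: of_real_eq_iff)
    then show ?thesis using that(3) by simp
  qed
  have Lx: "x * PsiR (2 * p) x = omega x ^ p - inverse (omega x ^ p)" if "p > 2"
  proof -
    have op: "odd p" using assms(1) that by (metis prime_odd_nat)
    show ?thesis by (rule real_L[OF assms(1) op])
  qed
  show ?thesis
    using partA1 partA2 partB partC partD Lx A1 B1 omega_diff[of x]
    by auto
qed



end
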